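(* Let $\mathbf A\in\mathbb C^{m\times n}$ with $\operatorname{rank}\mathbf A=r$, where $r<\min\{m,n\}$ or $r=n<m$. Then the projection matrix $\mathbf Q=\mathbf A\mathbf A^{+}\in\mathbb C^{m\times m}$ has entries \[ (\mathbf Q)_{ij}=\frac{q_{ij}}{d_r(\mathbf A\mathbf A^{*})},\qquad q_{ij}=\sum_{\alpha\in I_{r,m}\{j\}}\left|\left((\mathbf A\mathbf A^{*})_{j.}(\mathbf g_{i.})\right)^{\alpha}_{\alpha}\right|,\quad i,j=1,\dots,m,\] where $\mathbf g_{i.}$ is the $i$-th row of $\mathbf A\mathbf A^{*}$.
   Context: $\mathbf A^{+}$ is the Moore–Penrose inverse (unique $\mathbf X$ with $\mathbf A\mathbf X\mathbf A=\mathbf A$, $\mathbf X\mathbf A\mathbf X=\mathbf X$, $(\mathbf A\mathbf X)^{*}=\mathbf A\mathbf X$, $(\mathbf X\mathbf A)^{*}=\mathbf X\mathbf A$). $\mathbf M_{j.}(\mathbf c)$ denotes $\mathbf M$ with its $j$-th row replaced by the row vector $\mathbf c$. $I_{r,m}$ is the set of strictly increasing sequences of $r$ elements of $\{1,\dots,m\}$, $I_{r,m}\{j\}=\{\alpha\in I_{r,m}:j\in\alpha\}$, $\mathbf M^{\alpha}_{\alpha}$ is the principal submatrix indexed by $\alpha$, $|\cdot|$ is the determinant, and $d_r(\mathbf M)=\sum_{\alpha\in I_{r,m}}|\mathbf M^{\alpha}_{\alpha}|$. *)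

theory Defs
  imports "Jordan_Normal_Form.Schur_Decomposition" "Jordan_Normal_Form.DL_Submatrix" "Jordan_Normal_Form.DL_Rank"
begin

definition moore_penrose :: "complex mat \<Rightarrow> complex mat" where
  "moore_penrose A = (THE X. X \<in> carrier_mat (dim_col A) (dim_row A) \<and>
      A * X * A = A \<and> X * A * X = X \<and>
      mat_adjoint (A * X) = A * X \<and> mat_adjoint (X * A) = X * A)"

definition replace_row :: "'a mat \<Rightarrow> nat \<Rightarrow> 'a vec \<Rightarrow> 'a mat" where
  "replace_row M j c = mat (dim_row M) (dim_col M) (\<lambda>(i,k). if i = j then c $ k else M $$ (i,k))"

text \<open>I_{r,m} as r-element subsets of {0..<m} (indices are 0-based).\<close>
definition index_sets :: "nat \<Rightarrow> nat \<Rightarrow> nat set set" where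
  "index_sets r m = {\<alpha>. \<alpha> \<subseteq> {0..<m} \<and> card \<alpha> = r}"

definition d_r :: "nat \<Rightarrow> 'a :: comm_ring_1 mat \<Rightarrow> 'a" where
  "d_r r M = (\<Sum>\<alpha>\<in>index_sets r (dim_row M). det (submatrix M \<alpha> \<alpha>))"

end

theory Submission
  imports Defs
begin


section \<open>Rank one determinant lemma\<close>

lemma det_rank_one_update:
  fixes M Mi :: "complex mat"
  assumes M: "M \<in> carrier_mat r r" and Mi: "Mi \<in> carrier_mat r r"
    and inv: "M * Mi = 1\<^sub>m r"
    and U: "U \<in> carrier_mat r 1" and W: "W \<in> carrier_mat 1 r"
  shows "det (M + U * W) = det M * (1 + (W * Mi * U) $$ (0,0))"
proof -
  define X where "X = W * Mi * U"
  have X: "X \<in> carrier_mat 1 1" using W Mi U unfolding X_def by auto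
  define L1 where "L1 = four_block_mat (1\<^sub>m 1) (0\<^sub>m 1 r) U (1\<^sub>m r)"
  define R1 where "R1 = four_block_mat (1\<^sub>m 1) (- W) (0\<^sub>m r 1) (M + U * W)"
  define L2 where "L2 = four_block_mat (1\<^sub>m 1 + X) (- W) (0\<^sub>m r 1) M"
  define R2 where "R2 = four_block_mat (1\<^sub>m 1) (0\<^sub>m 1 r) (Mi * U) (1\<^sub>m r)"
  define B where "B = four_block_mat (1\<^sub>m 1) (- W) U M"
  have UW: "U * W \<in> carrier_mat r r" using U W by auto
  have MiU: "Mi * U \<in> carrier_mat r 1" using U Mi by auto
  have "L1 * R1 = four_block_mat (1\<^sub>m 1 * 1\<^sub>m 1 + 0\<^sub>m 1 r * 0\<^sub>m r 1) (1\<^sub>m 1 * - W + 0\<^sub>m 1 r * (M + U * W))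
     (U * 1\<^sub>m 1 + 1\<^sub>m r * 0\<^sub>m r 1) (U * - W + 1\<^sub>m r * (M + U * W))"
    unfolding L1_def R1_def
    by (rule mult_four_block_mat, insert U W M UW, auto)
  also have "\<dots> = B" unfolding B_def
    by (rule cong_four_block_mat; rule eq_matI, insert U W M UW, auto)
  finally have 1: "L1 * R1 = B" .
  have "L2 * R2 = four_block_mat ((1\<^sub>m 1 + X) * 1\<^sub>m 1 + - W * (Mi * U)) ((1\<^sub>m 1 + X) * 0\<^sub>m 1 r + - W * 1\<^sub>m r)
     (0\<^sub>m r 1 * 1\<^sub>m 1 + M * (Mi * U)) (0\<^sub>m r 1 * 0\<^sub>m 1 r + M * 1\<^sub>m r)"
    unfolding L2_def R2_def
    by (rule mult_four_block_mat, insert U W M X MiU, auto)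
  also have "\<dots> = B" unfolding B_def
  proof (rule cong_four_block_mat)
    have "W * (Mi * U) = X" unfolding X_def using W Mi U by (simp add: assoc_mult_mat)
    then have e: "- W * (Mi * U) = - X" using W Mi U by (subst uminus_mult_left_mat, auto)
    show "(1\<^sub>m 1 + X) * 1\<^sub>m 1 + - W * (Mi * U) = 1\<^sub>m 1"
      unfolding e using X by (intro eq_matI, auto)
    show "(1\<^sub>m 1 + X) * 0\<^sub>m 1 r + - W * 1\<^sub>m r = - W" using X W by (intro eq_matI, auto)
    have "M * (Mi * U) = U" using M Mi U inv by (simp add: assoc_mult_mat[symmetric])
    then show "0\<^sub>m r 1 * 1\<^sub>m 1 + M * (Mi * U) = U" using U by (intro eq_matI, auto)
    show "0\<^sub>m r 1 * 0\<^sub>m 1 r + M * 1\<^sub>m r = M" using M by (intro eq_matI, auto)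
  qed
  finally have 2: "L2 * R2 = B" .
  have L1c: "L1 \<in> carrier_mat (1+r) (1+r)" unfolding L1_def
    by (rule four_block_carrier_mat[OF one_carrier_mat one_carrier_mat])
  have R1c: "R1 \<in> carrier_mat (1+r) (1+r)" unfolding R1_def
    by (rule four_block_carrier_mat, auto simp: M UW)
  have L2c: "L2 \<in> carrier_mat (1+r) (1+r)" unfolding L2_def
    by (rule four_block_carrier_mat, insert X M, auto)
  have R2c: "R2 \<in> carrier_mat (1+r) (1+r)" unfolding R2_def
    by (rule four_block_carrier_mat[OF one_carrier_mat one_carrier_mat])
  have dL1: "det L1 = 1" unfolding L1_def
    by (subst det_four_block_mat_upper_right_zero[of _ 1 _ r], insert U, auto)
  have dR1: "det R1 = det (M + U * W)" unfolding R1_def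
    by (subst det_four_block_mat_lower_left_zero[of _ 1 _ r], insert W M UW, auto)
  have dL2: "det L2 = det (1\<^sub>m 1 + X) * det M" unfolding L2_def
    by (subst det_four_block_mat_lower_left_zero[of _ 1 _ r], insert W M X, auto)
  have dR2: "det R2 = 1" unfolding R2_def
    by (subst det_four_block_mat_upper_right_zero[of _ 1 _ r], insert MiU, auto)
  have d1: "det (1\<^sub>m 1 + X) = 1 + X $$ (0,0)"
    by (subst det_single, insert X, auto)
  have "det B = det (M + U * W)" using 1 det_mult[OF L1c R1c] dL1 dR1 by simp
  moreover have "det B = (1 + X $$ (0,0)) * det M" using 2 det_mult[OF L2c R2c] dL2 dR2 d1 by simp
  ultimately show ?thesis unfolding X_def by (simp add: ac_simps)
qed

lemma mat_adjoint_alt: "mat_adjoint (A::complex mat) = mat (dim_col A) (dim_row A) (\<lambda>(i,j). cnj (A$$(j,i)))"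
  unfolding mat_adjoint_def by (auto simp: mat_of_rows_def)

lemma mat_adjoint_dims[simp]:
  "dim_row (mat_adjoint (A::complex mat)) = dim_col A"
  "dim_col (mat_adjoint (A::complex mat)) = dim_row A"
  unfolding mat_adjoint_alt by auto

lemma mat_adjoint_index[simp]:
  "i < dim_col A \<Longrightarrow> j < dim_row A \<Longrightarrow> mat_adjoint (A::complex mat) $$ (i,j) = cnj (A $$ (j,i))"
  unfolding mat_adjoint_alt by auto

lemma mat_adjoint_carrier[simp,intro]:
  "(A::complex mat) \<in> carrier_mat m n \<Longrightarrow> mat_adjoint A \<in> carrier_mat n m"
  unfolding carrier_mat_def by auto

lemma mat_adjoint_adjoint[simp]: "mat_adjoint (mat_adjoint (A::complex mat)) = A"
  by (rule eq_matI, auto)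

lemma mat_adjoint_mult:
  assumes "(A::complex mat) \<in> carrier_mat m n" "B \<in> carrier_mat n p"
  shows "mat_adjoint (A * B) = mat_adjoint B * mat_adjoint A"
  using assms by (intro eq_matI, auto simp: scalar_prod_def cnj_sum intro!: sum.cong)

lemma mat_adjoint_one[simp]: "mat_adjoint (1\<^sub>m n :: complex mat) = 1\<^sub>m n"
  by (rule eq_matI, auto)

section \<open>Uniqueness of the Moore-Penrose inverse\<close>

definition mp_cond :: "complex mat \<Rightarrow> complex mat \<Rightarrow> bool" where
  "mp_cond A X \<longleftrightarrow> X \<in> carrier_mat (dim_col A) (dim_row A) \<and>
      A * X * A = A \<and> X * A * X = X \<and>
      mat_adjoint (A * X) = A * X \<and> mat_adjoint (X * A) = X * A"

lemma mp_unique: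
  assumes A: "A \<in> carrier_mat m n" and X: "mp_cond A X" and Y: "mp_cond A Y"
  shows "X = Y"
proof -
  have Xc: "X \<in> carrier_mat n m" and Yc: "Y \<in> carrier_mat n m" using X Y A unfolding mp_cond_def by auto
  note c = A Xc Yc mat_adjoint_carrier[OF A] mat_adjoint_carrier[OF Xc] mat_adjoint_carrier[OF Yc]
  from X have X1: "A * X * A = A" and X2: "X * A * X = X" and X3: "mat_adjoint (A * X) = A * X"
    and X4: "mat_adjoint (X * A) = X * A" unfolding mp_cond_def by auto
  from Y have Y1: "A * Y * A = A" and Y2: "Y * A * Y = Y" and Y3: "mat_adjoint (A * Y) = A * Y"
    and Y4: "mat_adjoint (Y * A) = Y * A" unfolding mp_cond_def by auto
  have aA1: "mat_adjoint A = mat_adjoint A * (A * Y)"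
  proof -
    have "mat_adjoint A = mat_adjoint (A * Y * A)" using Y1 by simp
    also have "\<dots> = mat_adjoint A * mat_adjoint (A * Y)"
      using c by (subst mat_adjoint_mult[of _ m m _ n], auto)
    finally show ?thesis using Y3 by simp
  qed
  have aA2: "mat_adjoint A = (X * A) * mat_adjoint A"
  proof -
    have "mat_adjoint A = mat_adjoint (A * (X * A))" using X1 c by (simp add: assoc_mult_mat[of _ m n _ m _ n])
    also have "\<dots> = mat_adjoint (X * A) * mat_adjoint A"
      using c by (subst mat_adjoint_mult[of _ m n _ n], auto)
    finally show ?thesis using X4 by simp
  qed
  have "X = X * (A * X)" using X2 c by (simp add: assoc_mult_mat[of _ n m _ n _ m])
  also have "\<dots> = X * (mat_adjoint X * mat_adjoint A)"
    using X3 c by (simp add: mat_adjoint_mult[of _ m n _ m])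
  also have "\<dots> = X * (mat_adjoint X * (mat_adjoint A * (A * Y)))" using aA1 by simp
  also have "\<dots> = X * ((mat_adjoint X * mat_adjoint A) * A * Y)"
  proof -
    have "(mat_adjoint X * mat_adjoint A) * A * Y = (mat_adjoint X * mat_adjoint A) * (A * Y)"
      using c by (intro assoc_mult_mat[of _ m m _ n _ m]) auto
    also have "\<dots> = mat_adjoint X * (mat_adjoint A * (A * Y))"
      using c by (intro assoc_mult_mat[of _ m n _ m _ m]) auto
    finally show ?thesis by simp
  qed
  also have "mat_adjoint X * mat_adjoint A = A * X"
    using X3 c by (simp add: mat_adjoint_mult[of _ m n _ m])
  also have "X * (A * X * A * Y) = X * A * Y"
    using X1 c by (simp add: assoc_mult_mat[of _ n m _ n _ m])
  finally have eX: "X = X * A * Y" .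
  have "Y = (Y * A) * Y" using Y2 by simp
  also have "\<dots> = (mat_adjoint A * mat_adjoint Y) * Y"
    using Y4 c by (simp add: mat_adjoint_mult[of _ n m _ n])
  also have "\<dots> = ((X * A) * mat_adjoint A * mat_adjoint Y) * Y" using aA2 by simp
  also have "\<dots> = (X * A) * (mat_adjoint A * mat_adjoint Y) * Y"
    using c by (subst assoc_mult_mat[of "X*A" n n "mat_adjoint A" m "mat_adjoint Y" n], auto)
  also have "mat_adjoint A * mat_adjoint Y = Y * A"
    using Y4 c by (simp add: mat_adjoint_mult[of _ n m _ n])
  also have "X * A * (Y * A) * Y = X * A * Y"
    using Y2 c by (subst assoc_mult_mat[of "X*A" n n "Y*A" n Y m], auto)
  finally have eY: "Y = X * A * Y" .
  show ?thesis using eX eY by simp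
qed

lemma moore_penrose_eqI:
  assumes A: "A \<in> carrier_mat m n" and X: "mp_cond A X"
  shows "moore_penrose A = X"
  unfolding moore_penrose_def
  unfolding mp_cond_def[symmetric]
  by (rule the_equality[where P="mp_cond A", OF X]) (simp add: mp_unique[OF A X])


definition minv :: "complex mat \<Rightarrow> complex mat" where
  "minv N = (1 / det N) \<cdot>\<^sub>m adj_mat N"

lemma minv:
  assumes N: "N \<in> carrier_mat n n" and d: "det N \<noteq> 0"
  shows "minv N \<in> carrier_mat n n" "N * minv N = 1\<^sub>m n" "minv N * N = 1\<^sub>m n"
proof -
  note a = adj_mat[OF N]
  show "minv N \<in> carrier_mat n n" unfolding minv_def using a by auto
  have "N * minv N = (1 / det N) \<cdot>\<^sub>m (N * adj_mat N)" unfolding minv_def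
    using N a by (simp add: mult_smult_distrib)
  also have "\<dots> = 1\<^sub>m n" unfolding a using d by (intro eq_matI, auto)
  finally show "N * minv N = 1\<^sub>m n" .
  have "minv N * N = (1 / det N) \<cdot>\<^sub>m (adj_mat N * N)" unfolding minv_def
    using N a by (simp add: mult_smult_assoc_mat)
  also have "\<dots> = 1\<^sub>m n" unfolding a using d by (intro eq_matI, auto)
  finally show "minv N * N = 1\<^sub>m n" .
qed

lemma minv_herm:
  assumes N: "N \<in> carrier_mat n n" and d: "det N \<noteq> 0" and h: "mat_adjoint N = N"
  shows "mat_adjoint (minv N) = minv N"
proof -
  note i = minv[OF N d]
  have 1: "mat_adjoint (minv N) * N = 1\<^sub>m n"
    using mat_adjoint_mult[OF N i(1)] i(2) h by simp
  have "mat_adjoint (minv N) = mat_adjoint (minv N) * (N * minv N)" using i by simp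
  also have "\<dots> = (mat_adjoint (minv N) * N) * minv N"
    using N i by (subst assoc_mult_mat[of _ n n _ n _ n], auto)
  also have "\<dots> = minv N" unfolding 1 using i by simp
  finally show ?thesis .
qed

lemma adj_kernel:
  assumes F: "(F::complex mat) \<in> carrier_mat m r" and x: "x \<in> carrier_vec r"
    and z: "mat_adjoint F *\<^sub>v (F *\<^sub>v x) = 0\<^sub>v r"
  shows "F *\<^sub>v x = 0\<^sub>v m"
proof -
  define y where "y = F *\<^sub>v x"
  have y: "y \<in> carrier_vec m" unfolding y_def using F x by auto
  have "(\<Sum>i<m. y$i * cnj (y$i)) = (\<Sum>i<m. \<Sum>l<r. y$i * cnj (F $$ (i,l)) * cnj (x $ l))"
    unfolding y_def using F x
    by (auto simp: scalar_prod_def cnj_sum sum_distrib_left ac_simps atLeast0LessThan intro!: sum.cong)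
  also have "\<dots> = (\<Sum>l<r. \<Sum>i<m. y$i * cnj (F $$ (i,l)) * cnj (x $ l))" by (rule sum.swap)
  also have "\<dots> = (\<Sum>l<r. cnj (x $ l) * (mat_adjoint F *\<^sub>v y) $ l)"
    using F y by (auto simp: scalar_prod_def sum_distrib_left ac_simps atLeast0LessThan intro!: sum.cong)
  also have "\<dots> = 0" using z unfolding y_def by auto
  finally have s: "(\<Sum>i<m. y$i * cnj (y$i)) = 0" .
  have eqn: "(\<Sum>i<m. y$i * cnj (y$i)) = complex_of_real (\<Sum>i<m. (cmod (y$i))^2)"
    by (simp only: of_real_sum complex_norm_square)
  from s[unfolded eqn] have "(\<Sum>i<m. (cmod (y$i))^2) = 0" by (simp only: of_real_eq_0_iff)
  hence "\<forall>i\<in>{..<m}. (cmod (y$i))^2 = 0" by (subst sum_nonneg_eq_0_iff[symmetric], auto)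
  hence "\<And>i. i < m \<Longrightarrow> y $ i = 0" by auto
  thus ?thesis using y unfolding y_def[symmetric] by (intro eq_vecI, auto)
qed

lemma det_gram_nonzero:
  assumes F: "(F::complex mat) \<in> carrier_mat m r"
    and inj: "\<And>x. x \<in> carrier_vec r \<Longrightarrow> F *\<^sub>v x = 0\<^sub>v m \<Longrightarrow> x = 0\<^sub>v r"
  shows "det (mat_adjoint F * F) \<noteq> 0"
proof
  assume d0: "det (mat_adjoint F * F) = 0"
  have N: "mat_adjoint F * F \<in> carrier_mat r r" using F by auto
  obtain x where x: "x \<in> carrier_vec r" "x \<noteq> 0\<^sub>v r" "(mat_adjoint F * F) *\<^sub>v x = 0\<^sub>v r"
    using det_0_iff_vec_prod_zero_field[OF N] d0 by blast
  have "mat_adjoint F *\<^sub>v (F *\<^sub>v x) = 0\<^sub>v r"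
    using x(3) assoc_mult_mat_vec[OF mat_adjoint_carrier[OF F] F x(1)] by simp
  from adj_kernel[OF F x(1) this] inj x show False by auto
qed


section \<open>Full rank factorization\<close>

lemma rank_factorization:
  assumes A: "(A::complex mat) \<in> carrier_mat m n" and rk: "vec_space.rank m A = r"
  obtains F C where "F \<in> carrier_mat m r" "C \<in> carrier_mat r n" "A = F * C"
    "\<And>x. x \<in> carrier_vec r \<Longrightarrow> F *\<^sub>v x = 0\<^sub>v m \<Longrightarrow> x = 0\<^sub>v r"
    "\<And>l. l < r \<Longrightarrow> \<exists>k<n. col C k = unit_vec r l"
proof -
  interpret vec_space "TYPE(complex)" m .
  let ?P = "\<lambda>T. T \<subseteq> set (cols A) \<and> lin_indpt T"
  obtain S where max: "maximal S ?P"
    using maximal_exists[of ?P "card (set (cols A))" "{}"]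
    by (meson List.finite_set card_mono empty_iff empty_subsetI finite_lin_indpt2 rev_finite_subset)
  have cardS: "card S = r" using rank_card_indpt[OF A max] rk by simp
  have Scols: "S \<subseteq> set (cols A)" and indS: "lin_indpt S" using max unfolding maximal_def by auto
  have colsC: "set (cols A) \<subseteq> carrier_vec m" using A cols_dim by blast
  have SC: "S \<subseteq> carrier_vec m" using Scols colsC by auto
  have finS: "finite S" using Scols finite_subset by blast
  obtain ws where ws: "set ws = S" "distinct ws" using finite_distinct_list[OF finS] by blast
  have lws: "length ws = r" using ws cardS distinct_card by fastforce
  define F where "F = mat_of_cols m ws"
  have F: "F \<in> carrier_mat m r" unfolding F_def using lws by auto
  have colsF: "cols F = ws" unfolding F_def using ws SC by (simp add: cols_mat_of_cols)
  have distF: "distinct (cols F)" using colsF ws by simp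
  have inj: "x = 0\<^sub>v r" if x: "x \<in> carrier_vec r" and Fx: "F *\<^sub>v x = 0\<^sub>v m" for x
  proof (rule ccontr)
    assume "x \<noteq> 0\<^sub>v r"
    from lin_depI[OF F x this Fx distF] indS colsF ws show False by simp
  qed
  have span: "c \<in> span S" if c: "c \<in> set (cols A)" for c
  proof (rule ccontr)
    assume ns: "c \<notin> span S"
    have cS: "c \<notin> S" using ns in_own_span[OF SC] by auto
    have cC: "c \<in> carrier_vec m" using c colsC by auto
    have "lin_indpt (S \<union> {c})" using lin_dep_iff_in_span[OF SC indS cC cS] ns by simp
    hence "?P (S \<union> {c})" using Scols c by auto
    with max have "S \<union> {c} = S" unfolding maximal_def by blast
    with cS show False by auto
  qed
  have ex: "\<exists>v. v \<in> carrier_vec r \<and> col A k = F *\<^sub>v v" if k: "k < n" for k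
  proof -
    have c: "col A k \<in> set (cols A)" using k A by (simp add: cols_def)
    obtain a where a: "lincomb a S = col A k"
      using finite_in_span[OF finS SC span[OF c]] by blast
    have "F *\<^sub>v (vec r (\<lambda>i. a (col F i))) = lincomb a (set (cols F))"
      by (rule mat_mult_eq_lincomb[OF F distF])
    with a colsF ws show ?thesis by (intro exI[of _ "vec r (\<lambda>i. a (col F i))"], auto)
  qed
  define v where "v k = (SOME v. v \<in> carrier_vec r \<and> col A k = F *\<^sub>v v)" for k
  have v: "v k \<in> carrier_vec r" "col A k = F *\<^sub>v v k" if "k < n" for k
    using someI_ex[OF ex[OF that]] unfolding v_def by auto
  define C where "C = mat_of_cols r (map v [0..<n])"
  have C: "C \<in> carrier_mat r n" unfolding C_def by auto
  have colC: "col C k = v k" if "k < n" for k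
    unfolding C_def using that v(1)[OF that] by (simp add: col_mat_of_cols)
  have AFC: "A = F * C"
  proof (rule eq_matI)
    fix i k assume i: "i < dim_row (F * C)" and k: "k < dim_col (F * C)"
    hence i': "i < m" and k': "k < n" using F C by auto
    have "(F * C) $$ (i,k) = (F *\<^sub>v col C k) $ i" using F C i' k' by auto
    also have "\<dots> = col A k $ i" using v(2)[OF k'] colC[OF k'] by simp
    also have "\<dots> = A $$ (i,k)" using A i' k' by auto
    finally show "A $$ (i,k) = (F * C) $$ (i,k)" by simp
  qed (insert A F C, auto)
  have unit: "\<exists>k<n. col C k = unit_vec r l" if l: "l < r" for l
  proof -
    have "col F l = ws ! l" using colsF l F by (metis cols_nth carrier_matD(2))
    hence "col F l \<in> S" using ws lws l by (metis nth_mem)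
    with Scols obtain k where k: "k < n" and ck: "col A k = col F l"
      using A by (auto simp: cols_def)
    have "F *\<^sub>v (v k - unit_vec r l) = F *\<^sub>v v k - F *\<^sub>v unit_vec r l"
      using F v(1)[OF k] by (simp add: mult_minus_distrib_mat_vec)
    also have "F *\<^sub>v unit_vec r l = col F l" using F l by (intro eq_vecI, auto)
    also have "F *\<^sub>v v k = col F l" using v(2)[OF k] ck by simp
    finally have "F *\<^sub>v (v k - unit_vec r l) = 0\<^sub>v m" using F by (auto intro!: eq_vecI)
    from inj[OF _ this] v(1)[OF k] have d: "v k - unit_vec r l = 0\<^sub>v r" by auto
    have "v k = unit_vec r l"
    proof (rule eq_vecI)
      fix i assume i: "i < dim_vec (unit_vec r l)"
      hence "(v k - unit_vec r l) $ i = 0" using d by simp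
      thus "v k $ i = unit_vec r l $ i" using v(1)[OF k] i by simp
    qed (use v(1)[OF k] in auto)
    with colC[OF k] k show ?thesis by auto
  qed
  show ?thesis by (rule that[OF F C AFC inj unit])
qed




section \<open>Cauchy-Binet\<close>

lemma pick_image:
  assumes fin: "finite (\<alpha>::nat set)"
  shows "pick \<alpha> ` {0..<card \<alpha>} = \<alpha>"
proof
  show "pick \<alpha> ` {0..<card \<alpha>} \<subseteq> \<alpha>" using pick_in_set_le by auto
  show "\<alpha> \<subseteq> pick \<alpha> ` {0..<card \<alpha>}"
  proof
    fix x assume x: "x \<in> \<alpha>"
    have "{a\<in>\<alpha>. a < x} \<subset> \<alpha>" using x by auto
    hence "card {a\<in>\<alpha>. a < x} < card \<alpha>" using fin by (simp add: psubset_card_mono)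
    moreover have "x = pick \<alpha> (card {a\<in>\<alpha>. a < x})" using pick_card_in_set[OF x] by simp
    ultimately show "x \<in> pick \<alpha> ` {0..<card \<alpha>}" by auto
  qed
qed

lemma pick_inj: "inj_on (pick \<alpha>) {0..<card \<alpha>}"
  by (rule inj_onI, metis atLeastLessThan_iff linorder_neqE_nat pick_mono_le less_irrefl)

lemma card_less_idx:
  assumes fin: "finite (\<alpha>::nat set)" and x: "x \<in> \<alpha>"
  shows "card {a\<in>\<alpha>. a < x} < card \<alpha>"
proof -
  have "{a\<in>\<alpha>. a < x} \<subset> \<alpha>" using x by auto
  thus ?thesis using fin by (simp add: psubset_card_mono)
qed

lemma submatrix_rows_carrier:
  assumes F: "F \<in> carrier_mat m r" and al: "\<alpha> \<subseteq> {0..<m}" "card \<alpha> = r"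
  shows "submatrix F \<alpha> UNIV \<in> carrier_mat r r"
proof -
  have "{i. i < m \<and> i \<in> \<alpha>} = \<alpha>" using al by auto
  moreover have "{j. j < r \<and> j \<in> (UNIV::nat set)} = {0..<r}" by auto
  ultimately show ?thesis using F al unfolding carrier_mat_def by (auto simp: dim_submatrix)
qed

lemma submatrix_cols_carrier:
  assumes K: "K \<in> carrier_mat r m" and al: "\<alpha> \<subseteq> {0..<m}" "card \<alpha> = r"
  shows "submatrix K UNIV \<alpha> \<in> carrier_mat r r"
proof -
  have "{i. i < m \<and> i \<in> \<alpha>} = \<alpha>" using al by auto
  moreover have "{j. j < r \<and> j \<in> (UNIV::nat set)} = {0..<r}" by auto
  ultimately show ?thesis using K al unfolding carrier_mat_def by (auto simp: dim_submatrix)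
qed

lemma submatrix_rows_index:
  assumes F: "F \<in> carrier_mat m r" and al: "\<alpha> \<subseteq> {0..<m}" "card \<alpha> = r"
    and i: "i < r" and j: "j < r"
  shows "submatrix F \<alpha> UNIV $$ (i,j) = F $$ (pick \<alpha> i, j)"
proof -
  have "{i. i < m \<and> i \<in> \<alpha>} = \<alpha>" using al by auto
  moreover have "{j. j < r \<and> j \<in> (UNIV::nat set)} = {0..<r}" by auto
  ultimately show ?thesis using F al i j by (subst submatrix_index, auto simp: pick_UNIV)
qed

lemma submatrix_cols_index:
  assumes K: "K \<in> carrier_mat r m" and al: "\<alpha> \<subseteq> {0..<m}" "card \<alpha> = r"
    and i: "i < r" and j: "j < r"
  shows "submatrix K UNIV \<alpha> $$ (i,j) = K $$ (i, pick \<alpha> j)"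
proof -
  have "{i. i < m \<and> i \<in> \<alpha>} = \<alpha>" using al by auto
  moreover have "{j. j < r \<and> j \<in> (UNIV::nat set)} = {0..<r}" by auto
  ultimately show ?thesis using K al i j by (subst submatrix_index, auto simp: pick_UNIV)
qed

lemma cauchy_binet:
  fixes K F :: "'a::comm_ring_1 mat"
  assumes K: "K \<in> carrier_mat r m" and F: "F \<in> carrier_mat m r"
  shows "det (K * F) = (\<Sum>\<alpha>\<in>index_sets r m. det (submatrix K UNIV \<alpha>) * det (submatrix F \<alpha> UNIV))"
proof -
  let ?U = "{0..<r}"
  let ?FF = "{f. (\<forall>i\<in>?U. f i \<in> {0..<m}) \<and> (\<forall>i. i \<notin> ?U \<longrightarrow> f i = i)}"
  let ?FI = "{f \<in> ?FF. inj_on f ?U}"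
  define D where "D f = det (mat\<^sub>r r r (\<lambda>i. row F (f i)))" for f
  define h where "h f = (\<Prod>i\<in>?U. K $$ (i, f i)) * D f" for f
  have rowF: "row F k \<in> carrier_vec r" for k using F by auto
  have "K * F = mat\<^sub>r r r (\<lambda>i. finsum_vec TYPE('a) r (\<lambda>k. K $$ (i,k) \<cdot>\<^sub>v row F k) {0..<m})"
    by (rule mat_mul_finsum_alt[OF K F])
  hence "det (K * F) = (\<Sum>f\<in>?FF. det (mat\<^sub>r r r (\<lambda>i. K $$ (i, f i) \<cdot>\<^sub>v row F (f i))))"
    by (simp add: det_linear_rows_sum[of "{0..<m}" "\<lambda>i k. K $$ (i,k) \<cdot>\<^sub>v row F k" r] rowF)
  also have "\<dots> = (\<Sum>f\<in>?FF. h f)"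
    unfolding h_def D_def by (rule sum.cong[OF refl], rule det_rows_mul, insert rowF, auto)
  also have "\<dots> = (\<Sum>f\<in>?FI. h f)"
  proof (rule sum.mono_neutral_right)
    show "finite ?FF" by (rule finite_bounded_functions, auto)
    show "?FI \<subseteq> ?FF" by auto
    show "\<forall>f\<in>?FF - ?FI. h f = 0"
    proof
      fix f assume f: "f \<in> ?FF - ?FI"
      then obtain i j where ij: "i \<in> ?U" "j \<in> ?U" "i \<noteq> j" "f i = f j"
        unfolding inj_on_def by auto
      have "D f = 0" unfolding D_def
        by (rule det_identical_rows[OF _ ij(3)], insert ij rowF, auto)
      thus "h f = 0" unfolding h_def by simp
    qed
  qed
  also have "\<dots> = (\<Sum>(\<alpha>,\<sigma>)\<in>Sigma (index_sets r m) (\<lambda>_. {\<sigma>. \<sigma> permutes ?U}).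
       (\<Prod>i\<in>?U. K $$ (i, pick \<alpha> (\<sigma> i))) * (signof \<sigma> * det (submatrix F \<alpha> UNIV)))"
  proof (rule sym, rule sum.reindex_bij_witness[where j = "\<lambda>(\<alpha>,\<sigma>) i. if i < r then pick \<alpha> (\<sigma> i) else i"
        and i = "\<lambda>f. (f ` ?U, \<lambda>x. if x < r then card {a \<in> f ` ?U. a < f x} else x)"])
    fix p assume p: "p \<in> Sigma (index_sets r m) (\<lambda>_. {\<sigma>. \<sigma> permutes ?U})"
    obtain \<alpha> \<sigma> where pa: "p = (\<alpha>,\<sigma>)" and al: "\<alpha> \<subseteq> {0..<m}" "card \<alpha> = r"
      and s: "\<sigma> permutes ?U" using p unfolding index_sets_def by auto
    have fin: "finite \<alpha>" using al finite_subset by blast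
    have sU: "\<sigma> i < r" if "i < r" for i using permutes_in_image[OF s] that by auto
    have sout: "\<sigma> i = i" if "\<not> i < r" for i using permutes_not_in[OF s] that by auto
    define f where "f i = (if i < r then pick \<alpha> (\<sigma> i) else i)" for i
    have img: "f ` ?U = \<alpha>"
    proof -
      have "f ` ?U = pick \<alpha> ` (\<sigma> ` ?U)" unfolding f_def by (auto simp: image_iff)
      also have "\<sigma> ` ?U = ?U" by (rule permutes_image[OF s])
      also have "pick \<alpha> ` ?U = \<alpha>" using pick_image[OF fin] al by simp
      finally show ?thesis .
    qed
    have st: "(\<lambda>x. if x < r then card {a \<in> \<alpha>. a < f x} else x) = \<sigma>"
    proof
      fix x show "(if x < r then card {a \<in> \<alpha>. a < f x} else x) = \<sigma> x"
        using card_pick_le[of "\<sigma> x" \<alpha>] al sU sout unfolding f_def by auto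
    qed
    have fdef: "(\<lambda>i. if i < r then pick \<alpha> (\<sigma> i) else i) = f" by (simp add: f_def fun_eq_iff)
    have phi: "(\<lambda>(\<alpha>,\<sigma>) i. if i < r then pick \<alpha> (\<sigma> i) else i) p = f" unfolding pa f_def by simp
    show "(\<lambda>f. (f ` ?U, \<lambda>x. if x < r then card {a \<in> f ` ?U. a < f x} else x))
        ((\<lambda>(\<alpha>,\<sigma>) i. if i < r then pick \<alpha> (\<sigma> i) else i) p) = p"
      unfolding phi img using st by (simp add: pa)
    have inj: "inj_on f ?U"
    proof (rule inj_onI)
      fix x y assume x: "x \<in> ?U" and y: "y \<in> ?U" and e: "f x = f y"
      hence "pick \<alpha> (\<sigma> x) = pick \<alpha> (\<sigma> y)" unfolding f_def by auto
      hence "\<sigma> x = \<sigma> y" using inj_onD[OF pick_inj] sU x y al by auto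
      thus "x = y" using permutes_inj[OF s] by (auto dest: injD)
    qed
    have fm: "f i < m" if "i < r" for i
    proof -
      have "f i \<in> f ` ?U" using that by auto
      thus ?thesis using img al by auto
    qed
    have fout: "f i = i" if "\<not> i < r" for i unfolding f_def using that by simp
    have "f \<in> ?FI" using fm fout inj by auto
    thus "(\<lambda>(\<alpha>,\<sigma>) i. if i < r then pick \<alpha> (\<sigma> i) else i) p \<in> ?FI" unfolding pa f_def by simp
    have fi: "f i = pick \<alpha> (\<sigma> i)" if "i < r" for i using that unfolding f_def by simp
    have "mat\<^sub>r r r (\<lambda>i. row F (f i)) = mat r r (\<lambda>(i,j). submatrix F \<alpha> UNIV $$ (\<sigma> i, j))"
      by (rule eq_matI, insert fi sU F al fm, auto simp: submatrix_rows_index)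
    hence "D f = signof \<sigma> * det (submatrix F \<alpha> UNIV)"
      unfolding D_def using det_permute_rows[OF submatrix_rows_carrier[OF F al] s] by simp
    moreover have "(\<Prod>i\<in>?U. K $$ (i, f i)) = (\<Prod>i\<in>?U. K $$ (i, pick \<alpha> (\<sigma> i)))"
      using fi by auto
    ultimately show "h ((\<lambda>(\<alpha>,\<sigma>) i. if i < r then pick \<alpha> (\<sigma> i) else i) p) =
       (case p of (\<alpha>,\<sigma>) \<Rightarrow> (\<Prod>i\<in>?U. K $$ (i, pick \<alpha> (\<sigma> i))) * (signof \<sigma> * det (submatrix F \<alpha> UNIV)))"
      unfolding pa h_def using fdef by simp
  next
    fix f assume f: "f \<in> ?FI"
    define \<alpha> where "\<alpha> = f ` ?U"
    define \<sigma> where "\<sigma> x = (if x < r then card {a \<in> \<alpha>. a < f x} else x)" for x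
    have inj: "inj_on f ?U" using f by auto
    have al: "\<alpha> \<subseteq> {0..<m}" "card \<alpha> = r" unfolding \<alpha>_def using f card_image[OF inj] by auto
    have fin: "finite \<alpha>" unfolding \<alpha>_def by auto
    have fa: "f i \<in> \<alpha>" if "i < r" for i unfolding \<alpha>_def using that by auto
    have bk: "pick \<alpha> (\<sigma> i) = f i" if "i < r" for i
      unfolding \<sigma>_def using that pick_card_in_set[OF fa[OF that]] by simp
    show "(\<lambda>(\<alpha>,\<sigma>) i. if i < r then pick \<alpha> (\<sigma> i) else i)
        ((\<lambda>f. (f ` ?U, \<lambda>x. if x < r then card {a \<in> f ` ?U. a < f x} else x)) f) = f"
    proof
      fix i show "(\<lambda>(\<alpha>,\<sigma>) i. if i < r then pick \<alpha> (\<sigma> i) else i)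
        ((\<lambda>f. (f ` ?U, \<lambda>x. if x < r then card {a \<in> f ` ?U. a < f x} else x)) f) i = f i"
        using bk[of i] f unfolding \<sigma>_def \<alpha>_def by auto
    qed
    have sU: "\<sigma> ` ?U \<subseteq> ?U"
      using card_less_idx[OF fin fa] al unfolding \<sigma>_def by auto
    have sinj: "inj_on \<sigma> ?U"
    proof (rule inj_onI)
      fix x y assume x: "x \<in> ?U" and y: "y \<in> ?U" and e: "\<sigma> x = \<sigma> y"
      hence "f x = f y" using bk[of x] bk[of y] by auto
      thus "x = y" using inj_onD[OF inj] x y by auto
    qed
    have "\<sigma> permutes ?U"
      by (rule bij_imp_permutes, unfold bij_betw_def, insert endo_inj_surj[OF _ sU sinj] sinj,
          auto simp: \<sigma>_def)
    thus "(\<lambda>f. (f ` ?U, \<lambda>x. if x < r then card {a \<in> f ` ?U. a < f x} else x)) f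
       \<in> Sigma (index_sets r m) (\<lambda>_. {\<sigma>. \<sigma> permutes ?U})"
      using al unfolding index_sets_def \<sigma>_def \<alpha>_def by auto
  qed
  also have "\<dots> = (\<Sum>\<alpha>\<in>index_sets r m. \<Sum>\<sigma>\<in>{\<sigma>. \<sigma> permutes ?U}.
       (\<Prod>i\<in>?U. K $$ (i, pick \<alpha> (\<sigma> i))) * (signof \<sigma> * det (submatrix F \<alpha> UNIV)))"
    by (rule sum.Sigma[symmetric], auto simp: index_sets_def finite_subset finite_permutations)
  also have "\<dots> = (\<Sum>\<alpha>\<in>index_sets r m. det (submatrix K UNIV \<alpha>) * det (submatrix F \<alpha> UNIV))"
  proof (rule sum.cong[OF refl])
    fix \<alpha> assume a: "\<alpha> \<in> index_sets r m"
    hence al: "\<alpha> \<subseteq> {0..<m}" "card \<alpha> = r" unfolding index_sets_def by auto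
    have "det (submatrix K UNIV \<alpha>) = (\<Sum>\<sigma>\<in>{\<sigma>. \<sigma> permutes ?U}. signof \<sigma> * (\<Prod>i\<in>?U. K $$ (i, pick \<alpha> (\<sigma> i))))"
      unfolding det_def'[OF submatrix_cols_carrier[OF K al]]
    proof (rule sum.cong[OF refl])
      fix \<sigma> assume "\<sigma> \<in> {\<sigma>. \<sigma> permutes ?U}"
      hence sU: "\<sigma> i < r" if "i < r" for i using permutes_in_image that by auto
      show "signof \<sigma> * (\<Prod>i\<in>?U. submatrix K UNIV \<alpha> $$ (i, \<sigma> i)) =
            signof \<sigma> * (\<Prod>i\<in>?U. K $$ (i, pick \<alpha> (\<sigma> i)))"
        using sU by (auto simp: submatrix_cols_index[OF K al] intro!: prod.cong)
    qed
    thus "(\<Sum>\<sigma>\<in>{\<sigma>. \<sigma> permutes ?U}. (\<Prod>i\<in>?U. K $$ (i, pick \<alpha> (\<sigma> i))) * (signof \<sigma> * det (submatrix F \<alpha> UNIV)))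
       = det (submatrix K UNIV \<alpha>) * det (submatrix F \<alpha> UNIV)"
      by (simp add: sum_distrib_left ac_simps)
  qed
  finally show ?thesis .
qed




lemma assoc_dim:
  fixes A B C :: "'a::semiring_0 mat"
  shows "dim_col A = dim_row B \<Longrightarrow> dim_col B = dim_row C \<Longrightarrow> A * B * C = A * (B * C)"
  by (rule assoc_mult_mat[of A "dim_row A" "dim_col A" B "dim_col B" C "dim_col C"], auto)

lemma zero_row_det:
  fixes A :: "'a::comm_ring_1 mat"
  assumes A: "A \<in> carrier_mat n n" and k: "k < n" and z: "\<And>j. j < n \<Longrightarrow> A $$ (k,j) = 0"
  shows "det A = 0"
proof -
  have "A = mat\<^sub>r n n (\<lambda>i. if i = k then 0\<^sub>v n else row A i)"
    by (rule eq_matI, insert A z, auto)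
  also have "det \<dots> = 0" by (rule det_row_0[OF k], insert A, auto)
  finally show ?thesis .
qed

lemma submatrix_mult:
  fixes F K :: "'a::comm_ring_1 mat"
  assumes F: "F \<in> carrier_mat m r" and K: "K \<in> carrier_mat r m"
    and a: "\<alpha> \<in> index_sets r m" and b: "\<beta> \<in> index_sets r m"
  shows "det (submatrix (F * K) \<alpha> \<beta>) = det (submatrix F \<alpha> UNIV) * det (submatrix K UNIV \<beta>)"
proof -
  have al: "\<alpha> \<subseteq> {0..<m}" "card \<alpha> = r" and bl: "\<beta> \<subseteq> {0..<m}" "card \<beta> = r"
    using a b unfolding index_sets_def by auto
  have FK: "F * K \<in> carrier_mat m m" using F K by auto
  have e1: "{i. i < m \<and> i \<in> \<alpha>} = \<alpha>" "{i. i < m \<and> i \<in> \<beta>} = \<beta>" using al bl by auto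
  note Fa = submatrix_rows_carrier[OF F al] and Kb = submatrix_cols_carrier[OF K bl]
  have "submatrix (F * K) \<alpha> \<beta> = submatrix F \<alpha> UNIV * submatrix K UNIV \<beta>"
  proof (rule eq_matI)
    show "dim_row (submatrix (F * K) \<alpha> \<beta>) = dim_row (submatrix F \<alpha> UNIV * submatrix K UNIV \<beta>)"
      using Fa FK al e1 by (simp add: dim_submatrix)
    show "dim_col (submatrix (F * K) \<alpha> \<beta>) = dim_col (submatrix F \<alpha> UNIV * submatrix K UNIV \<beta>)"
      using Kb FK bl e1 by (simp add: dim_submatrix)
    fix i j assume "i < dim_row (submatrix F \<alpha> UNIV * submatrix K UNIV \<beta>)"
      "j < dim_col (submatrix F \<alpha> UNIV * submatrix K UNIV \<beta>)"
    hence i: "i < r" and j: "j < r" using Fa Kb by auto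
    have pi: "pick \<alpha> i < m" using pick_in_set_le[of i \<alpha>] al i by auto
    have pj: "pick \<beta> j < m" using pick_in_set_le[of j \<beta>] bl j by auto
    have "submatrix (F * K) \<alpha> \<beta> $$ (i,j) = (F * K) $$ (pick \<alpha> i, pick \<beta> j)"
      using i j FK al bl e1 by (subst submatrix_index, auto)
    also have "\<dots> = (\<Sum>k<r. F $$ (pick \<alpha> i, k) * K $$ (k, pick \<beta> j))"
      using F K pi pj by (auto simp: scalar_prod_def atLeast0LessThan intro!: sum.cong)
    also have "\<dots> = (submatrix F \<alpha> UNIV * submatrix K UNIV \<beta>) $$ (i,j)"
      using Fa Kb i j by (auto simp: scalar_prod_def atLeast0LessThan submatrix_rows_index[OF F al]
          submatrix_cols_index[OF K bl] intro!: sum.cong)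
    finally show "submatrix (F * K) \<alpha> \<beta> $$ (i,j) = (submatrix F \<alpha> UNIV * submatrix K UNIV \<beta>) $$ (i,j)" .
  qed
  thus ?thesis using det_mult[OF Fa Kb] by simp
qed

lemma submatrix_rows_eq:
  assumes F: "F \<in> carrier_mat m r" and F': "F' \<in> carrier_mat m r" and a: "\<alpha> \<in> index_sets r m"
    and e: "\<And>k b. k \<in> \<alpha> \<Longrightarrow> b < r \<Longrightarrow> F' $$ (k,b) = F $$ (k,b)"
  shows "submatrix F' \<alpha> UNIV = submatrix F \<alpha> UNIV"
proof -
  have al: "\<alpha> \<subseteq> {0..<m}" "card \<alpha> = r" using a unfolding index_sets_def by auto
  note c = submatrix_rows_carrier[OF F al] submatrix_rows_carrier[OF F' al]
  show ?thesis
    by (rule eq_matI, insert c e al pick_in_set_le[of _ \<alpha>],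
        auto simp: submatrix_rows_index[OF F al] submatrix_rows_index[OF F' al])
qed


lemma row_replace_row:
  assumes "a < dim_row F" "dim_vec c = dim_col F"
  shows "row (replace_row F j c) a = (if a = j then c else row F a)"
  using assms unfolding replace_row_def by (auto intro!: eq_vecI)

lemma replace_row_carrier:
  "F \<in> carrier_mat m r \<Longrightarrow> replace_row F j c \<in> carrier_mat m r"
  unfolding replace_row_def carrier_mat_def by auto

lemma sum_single:
  fixes f :: "nat \<Rightarrow> 'a::semiring_0"
  assumes "j < m"
  shows "(\<Sum>k = 0..<m. f k * (if k = j then c else 0)) = f j * c"
proof -
  have e: "(\<lambda>k. f k * (if k = j then c else 0)) = (\<lambda>k. if k = j then f j * c else 0)" by auto
  show ?thesis unfolding e using assms by simp
qed

lemma sum_split_mem: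
  assumes "finite S"
  shows "sum f S = sum f {x\<in>S. P x} + sum f {x\<in>S. \<not> P x}"
proof -
  have "S = {x\<in>S. P x} \<union> {x\<in>S. \<not> P x}" by auto
  hence "sum f S = sum f ({x\<in>S. P x} \<union> {x\<in>S. \<not> P x})" by simp
  also have "\<dots> = sum f {x\<in>S. P x} + sum f {x\<in>S. \<not> P x}"
    by (rule sum.union_disjoint, insert assms, auto)
  finally show ?thesis .
qed

lemma finite_index_sets: "finite (index_sets r m)"
  unfolding index_sets_def by (rule finite_subset[of _ "Pow {0..<m}"], auto)


theorem corollary2p3:
  fixes A :: "complex mat" and m n r :: nat
  assumes "A \<in> carrier_mat m n"
    and "vec_space.rank m A = r"
    and "r < min m n \<or> (r = n \<and> n < m)"
    and "i < m" and "j < m"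
  shows "(A * moore_penrose A) $$ (i, j) =
    (\<Sum>\<alpha>\<in>{\<alpha>\<in>index_sets r m. j \<in> \<alpha>}.
        det (submatrix (replace_row (A * mat_adjoint A) j (row (A * mat_adjoint A) i)) \<alpha> \<alpha>))
    / d_r r (A * mat_adjoint A)"
proof -
  note A = assms(1) and i = assms(4) and j = assms(5)
  obtain F C where F: "F \<in> carrier_mat m r" and C: "C \<in> carrier_mat r n" and AFC: "A = F * C"
    and inj: "\<And>x. x \<in> carrier_vec r \<Longrightarrow> F *\<^sub>v x = 0\<^sub>v m \<Longrightarrow> x = 0\<^sub>v r"
    and unit: "\<And>l. l < r \<Longrightarrow> \<exists>k<n. col C k = unit_vec r l"
    using rank_factorization[OF A assms(2)] by blast
  have aF: "mat_adjoint F \<in> carrier_mat r m" and aC: "mat_adjoint C \<in> carrier_mat n r"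
    using F C by auto
  define N1 where "N1 = mat_adjoint F * F"
  define N2 where "N2 = C * mat_adjoint C"
  have N1: "N1 \<in> carrier_mat r r" and N2: "N2 \<in> carrier_mat r r" unfolding N1_def N2_def using F C by auto
  have dN1: "det N1 \<noteq> 0" unfolding N1_def by (rule det_gram_nonzero[OF F inj])
  have injC: "x = 0\<^sub>v r" if x: "x \<in> carrier_vec r" and z: "mat_adjoint C *\<^sub>v x = 0\<^sub>v n" for x
  proof (rule eq_vecI)
    show "dim_vec x = dim_vec (0\<^sub>v r)" using x by simp
    fix l assume "l < dim_vec (0\<^sub>v r)"
    hence l: "l < r" by simp
    obtain k where k: "k < n" and ck: "col C k = unit_vec r l" using unit[OF l] by blast
    have Ce: "C $$ (t,k) = (if t = l then 1 else 0)" if "t < r" for t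
    proof -
      have "C $$ (t,k) = col C k $ t" using C k that by simp
      thus ?thesis unfolding ck using that l by simp
    qed
    have "(mat_adjoint C *\<^sub>v x) $ k = (\<Sum>t = 0..<r. x $ t * cnj (C $$ (t,k)))"
      using C x k by (auto simp: scalar_prod_def ac_simps intro!: sum.cong)
    also have "\<dots> = (\<Sum>t = 0..<r. x $ t * (if t = l then 1 else 0))"
      by (rule sum.cong[OF refl], insert Ce, auto)
    also have "\<dots> = x $ l" using sum_single[OF l, of "\<lambda>t. x $ t" 1] by simp
    finally show "x $ l = 0\<^sub>v r $ l" using z k l by simp
  qed
  have dN2: "det N2 \<noteq> 0" unfolding N2_def
    using det_gram_nonzero[OF aC injC] by simp
  have hN1: "mat_adjoint N1 = N1" unfolding N1_def using mat_adjoint_mult[OF aF F] by simp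
  have hN2: "mat_adjoint N2 = N2" unfolding N2_def using mat_adjoint_mult[OF C aC] by simp
  define P where "P = minv N1"
  define R where "R = minv N2"
  note P = minv[OF N1 dN1, folded P_def] and R = minv[OF N2 dN2, folded R_def]
  have hP: "mat_adjoint P = P" unfolding P_def by (rule minv_herm[OF N1 dN1 hN1])
  have hR: "mat_adjoint R = R" unfolding R_def by (rule minv_herm[OF N2 dN2 hN2])
  have dims[simp]: "dim_row F = m" "dim_col F = r" "dim_row C = r" "dim_col C = n"
    "dim_row P = r" "dim_col P = r" "dim_row R = r" "dim_col R = r" "dim_row A = m" "dim_col A = n"
    using F C P(1) R(1) A by auto
  have e1: "C * (mat_adjoint C * (R * Z)) = Z" if Z: "Z \<in> carrier_mat r k" for Z k
  proof -
    have "C * (mat_adjoint C * (R * Z)) = (N2 * R) * Z" unfolding N2_def using Z by (simp add: assoc_dim)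
    also have "\<dots> = Z" using R Z by simp
    finally show ?thesis .
  qed
  have e1': "C * (mat_adjoint C * R) = 1\<^sub>m r" using R unfolding N2_def by (simp add: assoc_dim)
  have e2: "mat_adjoint F * (F * (P * Z)) = Z" if Z: "Z \<in> carrier_mat r k" for Z k
  proof -
    have "mat_adjoint F * (F * (P * Z)) = (N1 * P) * Z" unfolding N1_def using Z by (simp add: assoc_dim)
    also have "\<dots> = Z" using P Z by simp
    finally show ?thesis .
  qed
  have e4: "P * (mat_adjoint F * (F * Z)) = Z" if Z: "Z \<in> carrier_mat r k" for Z k
  proof -
    have "P * (mat_adjoint F * (F * Z)) = (P * N1) * Z" unfolding N1_def using Z by (simp add: assoc_dim)
    also have "\<dots> = Z" using P Z by simp
    finally show ?thesis .
  qed
  have e3: "R * (C * (mat_adjoint C * Z)) = Z" if Z: "Z \<in> carrier_mat r k" for Z k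
  proof -
    have "R * (C * (mat_adjoint C * Z)) = (R * N2) * Z" unfolding N2_def using Z by (simp add: assoc_dim)
    also have "\<dots> = Z" using R Z by simp
    finally show ?thesis .
  qed
  define X0 where "X0 = mat_adjoint C * (R * (P * mat_adjoint F))"
  have X0: "X0 \<in> carrier_mat n m" unfolding X0_def
    by (rule mult_carrier_mat[OF aC mult_carrier_mat[OF R(1) mult_carrier_mat[OF P(1) aF]]])
  have AX0: "A * X0 = F * (P * mat_adjoint F)"
    unfolding AFC X0_def by (simp add: assoc_dim e1[OF mult_carrier_mat[OF P(1) aF]])
  have X0A: "X0 * A = mat_adjoint C * (R * C)"
    unfolding AFC X0_def by (simp add: assoc_dim e4[OF C])
  have mp: "mp_cond A X0"
    unfolding mp_cond_def
  proof (intro conjI)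
    show "X0 \<in> carrier_mat (dim_col A) (dim_row A)" using X0 by simp
    show "A * X0 * A = A" unfolding AX0 unfolding AFC by (simp add: assoc_dim e4[OF C])
    show "X0 * A * X0 = X0" unfolding X0A unfolding X0_def by (simp add: assoc_dim e1[OF mult_carrier_mat[OF P(1) aF]])
    show "mat_adjoint (A * X0) = A * X0" unfolding AX0
      using P(1) aF F hP by (simp add: mat_adjoint_mult[of _ m r _ m] mat_adjoint_mult[of _ r r _ m] assoc_dim)
    show "mat_adjoint (X0 * A) = X0 * A" unfolding X0A
      using R(1) aC C hR by (simp add: mat_adjoint_mult[of _ n r _ n] mat_adjoint_mult[of _ r r _ n] assoc_dim)
  qed
  have MP: "moore_penrose A = X0" by (rule moore_penrose_eqI[OF A mp])
  define K where "K = C * mat_adjoint A"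
  have K: "K \<in> carrier_mat r m" unfolding K_def using C A by auto
  have GFK: "A * mat_adjoint A = F * K" unfolding K_def AFC by (simp add: assoc_dim)
  have aA: "mat_adjoint A = mat_adjoint C * mat_adjoint F" unfolding AFC by (rule mat_adjoint_mult[OF F C])
  define M where "M = K * F"
  define Mi where "Mi = P * R"
  have M: "M \<in> carrier_mat r r" unfolding M_def using K F by auto
  have Mi: "Mi \<in> carrier_mat r r" unfolding Mi_def using P R by auto
  have MMi: "M * Mi = 1\<^sub>m r" unfolding M_def Mi_def K_def aA
    by (simp add: assoc_dim e2[OF R(1)] e1')
  have MiK: "Mi * K = P * mat_adjoint F" unfolding Mi_def K_def aA
    by (simp add: assoc_dim e3[OF aF])
  have dM: "det M \<noteq> 0"
  proof
    assume "det M = 0"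
    hence "det (M * Mi) = 0" using det_mult[OF M Mi] by simp
    thus False unfolding MMi by simp
  qed
  have dr: "d_r r (A * mat_adjoint A) = det M"
  proof -
    have "d_r r (A * mat_adjoint A) = (\<Sum>\<alpha>\<in>index_sets r m. det (submatrix (F * K) \<alpha> \<alpha>))"
      unfolding d_r_def GFK using F by simp
    also have "\<dots> = (\<Sum>\<alpha>\<in>index_sets r m. det (submatrix K UNIV \<alpha>) * det (submatrix F \<alpha> UNIV))"
      by (rule sum.cong[OF refl], subst submatrix_mult[OF F K], auto simp: ac_simps)
    also have "\<dots> = det M" unfolding M_def by (rule cauchy_binet[OF K F, symmetric])
    finally show ?thesis .
  qed
  define F' where "F' = replace_row F j (row F i)"
  define F0 where "F0 = replace_row F j (0\<^sub>v r)"
  have F': "F' \<in> carrier_mat m r" and F0: "F0 \<in> carrier_mat m r"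
    unfolding F'_def F0_def using F by (auto intro: replace_row_carrier)
  have F'e: "F' $$ (a,b) = (if a = j then F $$ (i,b) else F $$ (a,b))" if "a < m" "b < r" for a b
    unfolding F'_def replace_row_def using that i F by auto
  have F0e: "F0 $$ (a,b) = (if a = j then 0 else F $$ (a,b))" if "a < m" "b < r" for a b
    unfolding F0_def replace_row_def using that F by auto
  have HFK: "replace_row (A * mat_adjoint A) j (row (A * mat_adjoint A) i) = F' * K"
  proof (rule eq_matI)
    fix a b assume "a < dim_row (F' * K)" "b < dim_col (F' * K)"
    hence a: "a < m" and b: "b < m" using F' K by auto
    have rF': "row F' a = (if a = j then row F i else row F a)"
      unfolding F'_def using a F by (subst row_replace_row, auto)
    have FK: "F * K \<in> carrier_mat m m" using F K by simp
    have L: "replace_row (F * K) j (row (F * K) i) $$ (a,b) =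
        (if a = j then (F * K) $$ (i,b) else (F * K) $$ (a,b))"
      unfolding replace_row_def using a b i FK K by simp
    have R: "(F' * K) $$ (a,b) = row F' a \<bullet> col K b" using a b F' K by simp
    have R2: "(F * K) $$ (c,b) = row F c \<bullet> col K b" if "c < m" for c using that b F K by simp
    show "replace_row (A * mat_adjoint A) j (row (A * mat_adjoint A) i) $$ (a, b) = (F' * K) $$ (a, b)"
      unfolding GFK L R rF' using R2[OF i] R2[OF a] by simp
  next
    show "dim_row (replace_row (A * mat_adjoint A) j (row (A * mat_adjoint A) i)) = dim_row (F' * K)"
      unfolding replace_row_def GFK using F' F K by simp
    show "dim_col (replace_row (A * mat_adjoint A) j (row (A * mat_adjoint A) i)) = dim_col (F' * K)"
      unfolding replace_row_def GFK using F' F K by simp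
  qed
  have num1: "(\<Sum>\<alpha>\<in>{\<alpha>\<in>index_sets r m. j \<in> \<alpha>}.
        det (submatrix (replace_row (A * mat_adjoint A) j (row (A * mat_adjoint A) i)) \<alpha> \<alpha>))
     = (\<Sum>\<alpha>\<in>{\<alpha>\<in>index_sets r m. j \<in> \<alpha>}. det (submatrix K UNIV \<alpha>) * det (submatrix F' \<alpha> UNIV))"
    unfolding HFK by (rule sum.cong[OF refl], subst submatrix_mult[OF F' K], auto simp: ac_simps)
  have same: "submatrix F' \<alpha> UNIV = submatrix F \<alpha> UNIV" "submatrix F0 \<alpha> UNIV = submatrix F \<alpha> UNIV"
    if a: "\<alpha> \<in> index_sets r m" "j \<notin> \<alpha>" for \<alpha>
  proof -
    have km: "k < m" "k \<noteq> j" if "k \<in> \<alpha>" for k using a that unfolding index_sets_def by auto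
    show "submatrix F' \<alpha> UNIV = submatrix F \<alpha> UNIV"
      by (rule submatrix_rows_eq[OF F F' a(1)], insert km F'e, auto)
    show "submatrix F0 \<alpha> UNIV = submatrix F \<alpha> UNIV"
      by (rule submatrix_rows_eq[OF F F0 a(1)], insert km F0e, auto)
  qed
  have zero: "det (submatrix F0 \<alpha> UNIV) = 0" if a: "\<alpha> \<in> index_sets r m" "j \<in> \<alpha>" for \<alpha>
  proof -
    have al: "\<alpha> \<subseteq> {0..<m}" "card \<alpha> = r" using a unfolding index_sets_def by auto
    have fin: "finite \<alpha>" using al finite_subset by blast
    define k where "k = card {x\<in>\<alpha>. x < j}"
    have k: "k < r" unfolding k_def using card_less_idx[OF fin a(2)] al by simp
    have pk: "pick \<alpha> k = j" unfolding k_def by (rule pick_card_in_set[OF a(2)])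
    show ?thesis
      by (rule zero_row_det[OF submatrix_rows_carrier[OF F0 al] k],
          insert k pk j, auto simp: submatrix_rows_index[OF F0 al] F0e)
  qed
  have S: "finite (index_sets r m)" by (rule finite_index_sets)
  define g where "g \<alpha> = det (submatrix K UNIV \<alpha>) * det (submatrix F \<alpha> UNIV)" for \<alpha>
  define g' where "g' \<alpha> = det (submatrix K UNIV \<alpha>) * det (submatrix F' \<alpha> UNIV)" for \<alpha>
  define g0 where "g0 \<alpha> = det (submatrix K UNIV \<alpha>) * det (submatrix F0 \<alpha> UNIV)" for \<alpha>
  have CB1: "det (K * F') = sum g' {\<alpha>\<in>index_sets r m. j \<in> \<alpha>} + sum g {\<alpha>\<in>index_sets r m. j \<notin> \<alpha>}"
  proof -
    have "det (K * F') = sum g' (index_sets r m)" unfolding cauchy_binet[OF K F'] g'_def ..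
    also have "\<dots> = sum g' {\<alpha>\<in>index_sets r m. j \<in> \<alpha>} + sum g' {\<alpha>\<in>index_sets r m. j \<notin> \<alpha>}"
      by (rule sum_split_mem[OF S])
    also have "sum g' {\<alpha>\<in>index_sets r m. j \<notin> \<alpha>} = sum g {\<alpha>\<in>index_sets r m. j \<notin> \<alpha>}"
      by (rule sum.cong[OF refl], unfold g'_def g_def, insert same(1), auto)
    finally show ?thesis .
  qed
  have CB0: "det (K * F0) = sum g {\<alpha>\<in>index_sets r m. j \<notin> \<alpha>}"
  proof -
    have "det (K * F0) = sum g0 (index_sets r m)" unfolding cauchy_binet[OF K F0] g0_def ..
    also have "\<dots> = sum g0 {\<alpha>\<in>index_sets r m. j \<in> \<alpha>} + sum g0 {\<alpha>\<in>index_sets r m. j \<notin> \<alpha>}"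
      by (rule sum_split_mem[OF S])
    also have "sum g0 {\<alpha>\<in>index_sets r m. j \<in> \<alpha>} = 0"
      by (rule sum.neutral, unfold g0_def, insert zero, auto)
    also have "sum g0 {\<alpha>\<in>index_sets r m. j \<notin> \<alpha>} = sum g {\<alpha>\<in>index_sets r m. j \<notin> \<alpha>}"
      by (rule sum.cong[OF refl], unfold g0_def g_def, insert same(2), auto)
    finally show ?thesis by simp
  qed
  have num2: "(\<Sum>\<alpha>\<in>{\<alpha>\<in>index_sets r m. j \<in> \<alpha>}. det (submatrix K UNIV \<alpha>) * det (submatrix F' \<alpha> UNIV))
     = det (K * F') - det (K * F0)" unfolding CB1 CB0 g'_def by simp
  define U where "U = mat r 1 (\<lambda>(a,_). K $$ (a,j))"
  define W1 where "W1 = mat 1 r (\<lambda>(_,b). F $$ (i,b) - F $$ (j,b))"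
  define W0 where "W0 = mat 1 r (\<lambda>(_,b). - F $$ (j,b))"
  define E1 where "E1 = mat m r (\<lambda>(k,b). if k = j then F $$ (i,b) - F $$ (j,b) else 0)"
  define E0 where "E0 = mat m r (\<lambda>(k,b). if k = j then - F $$ (j,b) else 0)"
  have U: "U \<in> carrier_mat r 1" and W1: "W1 \<in> carrier_mat 1 r" and W0: "W0 \<in> carrier_mat 1 r"
    and E1: "E1 \<in> carrier_mat m r" and E0: "E0 \<in> carrier_mat m r"
    unfolding U_def W1_def W0_def E1_def E0_def by auto
  have FE1: "F' = F + E1" by (rule eq_matI, insert F'e F, auto simp: E1_def F'_def replace_row_def)
  have FE0: "F0 = F + E0" by (rule eq_matI, insert F0e F, auto simp: E0_def F0_def replace_row_def)
  have KE1: "K * E1 = U * W1"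
  proof (rule eq_matI)
    fix a b assume "a < dim_row (U * W1)" "b < dim_col (U * W1)"
    hence a: "a < r" and b: "b < r" using U W1 by auto
    have "(K * E1) $$ (a,b) = (\<Sum>k = 0..<m. K $$ (a,k) * (if k = j then F $$ (i,b) - F $$ (j,b) else 0))"
      using K E1 a b by (auto simp: scalar_prod_def E1_def intro!: sum.cong)
    also have "\<dots> = K $$ (a,j) * (F $$ (i,b) - F $$ (j,b))" by (rule sum_single[OF j])
    also have "\<dots> = (U * W1) $$ (a,b)" using a b by (simp add: U_def W1_def scalar_prod_def)
    finally show "(K * E1) $$ (a,b) = (U * W1) $$ (a,b)" .
  qed (insert K E1 U W1, auto)
  have KE0: "K * E0 = U * W0"
  proof (rule eq_matI)
    fix a b assume "a < dim_row (U * W0)" "b < dim_col (U * W0)"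
    hence a: "a < r" and b: "b < r" using U W0 by auto
    have "(K * E0) $$ (a,b) = (\<Sum>k = 0..<m. K $$ (a,k) * (if k = j then - F $$ (j,b) else 0))"
      using K E0 a b by (auto simp: scalar_prod_def E0_def intro!: sum.cong)
    also have "\<dots> = K $$ (a,j) * (- F $$ (j,b))" by (rule sum_single[OF j])
    also have "\<dots> = (U * W0) $$ (a,b)" using a b by (simp add: U_def W0_def scalar_prod_def)
    finally show "(K * E0) $$ (a,b) = (U * W0) $$ (a,b)" .
  qed (insert K E0 U W0, auto)
  have KF1: "K * F' = M + U * W1" unfolding FE1 M_def KE1[symmetric]
    by (rule mult_add_distrib_mat[OF K F E1])
  have KF0: "K * F0 = M + U * W0" unfolding FE0 M_def KE0[symmetric]
    by (rule mult_add_distrib_mat[OF K F E0])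
  define y where "y b = (Mi * U) $$ (b,0)" for b
  have Wy: "(W * Mi * U) $$ (0,0) = (\<Sum>b = 0..<r. W $$ (0,b) * y b)" if W: "W \<in> carrier_mat 1 r" for W
  proof -
    have "W * Mi * U = W * (Mi * U)" using W Mi U by (simp add: assoc_dim)
    thus ?thesis using W Mi U by (auto simp: y_def scalar_prod_def intro!: sum.cong)
  qed
  have yK: "y b = (Mi * K) $$ (b,j)" if b: "b < r" for b
    unfolding y_def using Mi U K b j by (auto simp: scalar_prod_def U_def intro!: sum.cong)
  have num3: "det (K * F') - det (K * F0) = det M * (\<Sum>b = 0..<r. F $$ (i,b) * y b)"
  proof -
    have "det (K * F') - det (K * F0) =
        det M * ((\<Sum>b = 0..<r. W1 $$ (0,b) * y b) - (\<Sum>b = 0..<r. W0 $$ (0,b) * y b))"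
      unfolding KF1 KF0 det_rank_one_update[OF M Mi MMi U W1] det_rank_one_update[OF M Mi MMi U W0]
        Wy[OF W1] Wy[OF W0] by (simp add: algebra_simps)
    also have "(\<Sum>b = 0..<r. W1 $$ (0,b) * y b) - (\<Sum>b = 0..<r. W0 $$ (0,b) * y b)
        = (\<Sum>b = 0..<r. F $$ (i,b) * y b)"
      unfolding sum_subtractf[symmetric] by (rule sum.cong[OF refl], auto simp: W1_def W0_def algebra_simps)
    finally show ?thesis .
  qed
  have Qij: "(A * moore_penrose A) $$ (i,j) = (\<Sum>b = 0..<r. F $$ (i,b) * y b)"
  proof -
    have "(A * moore_penrose A) $$ (i,j) = (F * (Mi * K)) $$ (i,j)" unfolding MP AX0 MiK by simp
    also have "\<dots> = (\<Sum>b = 0..<r. F $$ (i,b) * y b)"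
      using F Mi K i j yK by (auto simp: scalar_prod_def intro!: sum.cong)
    finally show ?thesis .
  qed
  show ?thesis unfolding num1 num2 num3 dr Qij using dM by simp
qed


end
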